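(* Let $n\geq 2$, $r>0$, $\varphi\in L^\infty(\mathbb{S}^{n-1})$, and let $A_{n,r}>0$ be the constant such that $\int_{\mathbb{S}^{n-1}}|\xi\cdot\theta|^r\,d\sigma(\theta)=A_{n,r}|\xi|^r$ for all $\xi\in\mathbb{R}^n$. For $\theta\in\mathbb{S}^{n-1}$ let $m_\theta(\xi)=\frac{|\xi\cdot\theta|^r}{|\xi|^r}$, and let $$m_r(\xi)=\frac{\int_{\mathbb{S}^{n-1}}|\xi\cdot\theta|^r\varphi(\theta)\,d\sigma(\theta)}{\int_{\mathbb{S}^{n-1}}|\xi\cdot\theta|^r\,d\sigma(\theta)}.$$ Then for all $f\in C_0^\infty(\mathbb{R}^n)$, $$T_{m_r}f(x)=A_{n,r}^{-1}\int_{\mathbb{S}^{n-1}}T_{m_\theta}f(x)\varphi(\theta)\,d\sigma(\theta)$$ for almost every $x\in\mathbb{R}^n$.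
   Context: $\sigma$ denotes surface measure on $\mathbb{S}^{n-1}$. For a bounded function $m$ on $\mathbb{R}^n$, $T_m$ is defined on $L^2(\mathbb{R}^n)$ by $\widehat{T_mf}(\xi)=m(\xi)\widehat f(\xi)$. *)

theory Defs
  imports "HOL-Analysis.Analysis"
begin

fun Ck_on_UNIV :: "nat \<Rightarrow> ('a::euclidean_space \<Rightarrow> 'b::real_normed_vector) \<Rightarrow> bool" where
  "Ck_on_UNIV 0 f = continuous_on UNIV f"
| "Ck_on_UNIV (Suc k) f = (f differentiable_on UNIV \<and> continuous_on UNIV f \<and>
      (\<forall>v. Ck_on_UNIV k (\<lambda>x. frechet_derivative f (at x) v)))"

definition smooth_fun :: "('a::euclidean_space \<Rightarrow> 'b::real_normed_vector) \<Rightarrow> bool" where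
  "smooth_fun f \<longleftrightarrow> (\<forall>k. Ck_on_UNIV k f)"

definition test_function :: "('a::euclidean_space \<Rightarrow> complex) \<Rightarrow> bool" where
  "test_function f \<longleftrightarrow> smooth_fun f \<and> compact (closure {x. f x \<noteq> 0})"

definition fourier :: "('a::euclidean_space \<Rightarrow> complex) \<Rightarrow> 'a \<Rightarrow> complex" where
  "fourier f \<xi> = (\<integral>x. f x * cis (- 2 * pi * (x \<bullet> \<xi>)) \<partial>lborel)"

text \<open>For f in C_0^infinity, hat f is Schwartz, so m * hat f is
  integrable for bounded measurable m and the L^2-defined operator T_m f agrees a.e. with the
  inverse Fourier integral of m * hat f.\<close>
definition multiplier_op :: "('a::euclidean_space \<Rightarrow> complex) \<Rightarrow> ('a \<Rightarrow> complex) \<Rightarrow> 'a \<Rightarrow> complex" where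
  "multiplier_op m f x = (\<integral>\<xi>. m \<xi> * fourier f \<xi> * cis (2 * pi * (x \<bullet> \<xi>)) \<partial>lborel)"

text \<open>Surface measure on the unit sphere S^{n-1}, via the cone construction:
  sigma(E) = n * Lebesgue measure of {x : 0 < |x| <= 1, x/|x| in E}.\<close>
definition sphere_measure :: "'a::euclidean_space measure" where
  "sphere_measure = distr
     (density lborel (\<lambda>x. ennreal (real DIM('a)) * indicator (cball 0 1 - {0}) x))
     (restrict_space borel (sphere 0 1))
     (\<lambda>x. x /\<^sub>R norm x)"

end

theory Submission
  imports Defs
begin


definition dd :: "('a::euclidean_space \<Rightarrow> complex) \<Rightarrow> 'a \<Rightarrow> 'a \<Rightarrow> complex" where
  "dd g v = (\<lambda>x. frechet_derivative g (at x) v)"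

definition spt :: "('a::euclidean_space \<Rightarrow> complex) \<Rightarrow> 'a set" where
  "spt g = closure {x. g x \<noteq> 0}"

lemma Ck_cont: "Ck_on_UNIV k f \<Longrightarrow> continuous_on UNIV f"
  by (cases k) auto

lemma smooth_cont: "smooth_fun f \<Longrightarrow> continuous_on UNIV f"
  unfolding smooth_fun_def using Ck_cont by blast

lemma smooth_differentiable: "smooth_fun f \<Longrightarrow> f differentiable (at x)"
proof -
  assume "smooth_fun f"
  then have "Ck_on_UNIV (Suc 0) f" unfolding smooth_fun_def by blast
  then have "f differentiable_on UNIV" by simp
  then show ?thesis unfolding differentiable_on_def by auto
qed

lemma smooth_dd: "smooth_fun f \<Longrightarrow> smooth_fun (dd f v)"
  unfolding smooth_fun_def dd_def
proof
  fix k assume "\<forall>k. Ck_on_UNIV k f"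
  then have "Ck_on_UNIV (Suc k) f" by blast
  then show "Ck_on_UNIV k (\<lambda>x. frechet_derivative f (at x) v)" by simp
qed

lemma smooth_has_derivative: "smooth_fun f \<Longrightarrow> (f has_derivative frechet_derivative f (at x)) (at x)"
  using smooth_differentiable frechet_derivative_works by blast

lemma zero_outside_spt:
  assumes "x \<notin> spt g" shows "g x = 0"
proof (rule ccontr)
  assume "g x \<noteq> 0"
  then have "x \<in> {x. g x \<noteq> 0}" by simp
  then have "x \<in> spt g" unfolding spt_def by (rule closure_subset[THEN subsetD])
  then show False using assms by simp
qed

lemma dd_zero_outside:
  fixes g :: "'a::euclidean_space \<Rightarrow> complex"
  assumes "smooth_fun g" "x \<notin> spt g"
  shows "dd g v x = 0"
proof -
  have op1: "open (- spt g)" by (rule open_Compl) (simp add: spt_def)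
  have z: "\<And>y. y \<in> - spt g \<Longrightarrow> 0 = g y"
    using zero_outside_spt by (metis ComplD)
  have "(g has_derivative (\<lambda>_. 0)) (at x)"
    by (rule has_derivative_transform_within_open[of "\<lambda>_. 0" "\<lambda>_. 0" x UNIV "- spt g" g])
      (auto simp: op1 z assms(2))
  then have "(\<lambda>_. 0) = frechet_derivative g (at x)" by (rule frechet_derivative_at)
  then have "frechet_derivative g (at x) = (\<lambda>_. 0)" by (rule sym)
  then show ?thesis by (simp add: dd_def)
qed

lemma spt_dd:
  assumes "smooth_fun g" shows "spt (dd g v) \<subseteq> spt g"
proof -
  have "{x. dd g v x \<noteq> 0} \<subseteq> spt g" using dd_zero_outside[OF assms] by blast
  moreover have "closed (spt g)" unfolding spt_def by simp
  ultimately show ?thesis unfolding spt_def[of "dd g v"] by (rule closure_minimal)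
qed

lemma test_dd: "test_function g \<Longrightarrow> test_function (dd g v)"
proof -
  assume t: "test_function g"
  then have s: "smooth_fun g" and c: "compact (spt g)" unfolding test_function_def spt_def by auto
  have "compact (spt (dd g v))"
    using compact_Int_closed[OF c, of "spt (dd g v)"] spt_dd[OF s, of v]
    by (simp add: spt_def Int_absorb1 Int_commute)
  then show ?thesis using smooth_dd[OF s] unfolding test_function_def spt_def by auto
qed

lemma dd_bounded:
  assumes "test_function g"
  shows "\<exists>B\<ge>0. \<forall>x. norm (dd g v x) \<le> B"
proof -
  have s: "smooth_fun g" and c: "compact (spt g)" using assms unfolding test_function_def spt_def by auto
  have "continuous_on UNIV (dd g v)" using smooth_cont[OF smooth_dd[OF s]] .
  then have "compact (dd g v ` spt g)"
    using compact_continuous_image c continuous_on_subset by blast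
  then obtain B where B: "B > 0" "\<And>y. y \<in> dd g v ` spt g \<Longrightarrow> norm y \<le> B"
    using compact_imp_bounded bounded_pos by metis
  have "norm (dd g v x) \<le> B" for x
    using B dd_zero_outside[OF s, of x v] by (cases "x \<in> spt g") auto
  then show ?thesis using B(1) by (intro exI[of _ B]) auto
qed

lemma line_deriv:
  assumes "smooth_fun g"
  shows "((\<lambda>s. g (x + s *\<^sub>R v)) has_derivative (\<lambda>u. u *\<^sub>R dd g v (x + s *\<^sub>R v))) (at s)"
proof -
  have d1: "((\<lambda>s. x + s *\<^sub>R v) has_derivative (\<lambda>u. u *\<^sub>R v)) (at s)"
    by (auto intro!: derivative_eq_intros)
  have d2: "(g has_derivative frechet_derivative g (at (x + s *\<^sub>R v))) (at (x + s *\<^sub>R v))"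
    using smooth_has_derivative[OF assms] .
  have bl: "linear (frechet_derivative g (at (x + s *\<^sub>R v)))"
    using d2 has_derivative_linear by blast
  have "((\<lambda>s. g (x + s *\<^sub>R v)) has_derivative (\<lambda>u. frechet_derivative g (at (x + s *\<^sub>R v)) (u *\<^sub>R v))) (at s)"
    using has_derivative_compose[OF d1 d2] by (simp add: o_def)
  then show ?thesis using linear_scale[OF bl] unfolding dd_def by simp
qed

lemma mvt_bound:
  assumes "smooth_fun g" "\<And>y. norm (dd g v y) \<le> B" "t > 0"
  shows "norm (g (x + t *\<^sub>R v) - g x) \<le> B * t"
proof -
  have c: "continuous_on {0..t} (\<lambda>s. g (x + s *\<^sub>R v))"
    by (intro continuous_on_compose2[OF smooth_cont[OF assms(1)]]) (auto intro!: continuous_intros)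
  obtain s where "norm (g (x + t *\<^sub>R v) - g (x + 0 *\<^sub>R v)) \<le> norm ((t - 0) *\<^sub>R dd g v (x + s *\<^sub>R v))"
    using mvt_general[OF assms(3) c line_deriv[OF assms(1)]] by blast
  also have "\<dots> \<le> t * B" using assms(2)[of "x + s *\<^sub>R v"] assms(3) by (simp add: mult_left_mono)
  finally show ?thesis by (simp add: mult.commute)
qed

lemma limq:
  fixes f :: "real \<Rightarrow> 'b::real_normed_vector"
  assumes "(f has_vector_derivative D) (at 0)" "h \<longlonglongrightarrow> 0" "\<And>k. h k \<noteq> 0"
  shows "(\<lambda>k. (f (h k) - f 0) /\<^sub>R h k) \<longlonglongrightarrow> D"
proof -
  have "((\<lambda>u. norm (f (0 + u) - f 0 - u *\<^sub>R D) / norm u) \<longlongrightarrow> 0) (at 0)"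
    using assms(1) unfolding has_vector_derivative_def has_derivative_at by blast
  moreover have "filterlim h (at 0) sequentially"
    using assms(2,3) by (simp add: filterlim_at)
  ultimately have "(\<lambda>k. norm (f (h k) - f 0 - h k *\<^sub>R D) / norm (h k)) \<longlonglongrightarrow> 0"
    using filterlim_compose[of _ "nhds 0" "at 0" h] by auto
  moreover have "norm ((f (h k) - f 0) /\<^sub>R h k - D) = norm (f (h k) - f 0 - h k *\<^sub>R D) / norm (h k)" for k
  proof -
    have "(f (h k) - f 0) /\<^sub>R h k - D = (f (h k) - f 0 - h k *\<^sub>R D) /\<^sub>R h k"
      using assms(3)[of k] by (simp add: algebra_simps)
    then show ?thesis by (simp add: divide_inverse mult.commute)
  qed
  ultimately have "(\<lambda>k. norm ((f (h k) - f 0) /\<^sub>R h k - D)) \<longlonglongrightarrow> 0" by simp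
  then show ?thesis by (simp add: tendsto_norm_zero_iff LIM_zero_iff)
qed


lemma test_smooth: "test_function g \<Longrightarrow> smooth_fun g"
  unfolding test_function_def by auto

lemma test_compact: "test_function g \<Longrightarrow> compact (spt g)"
  unfolding test_function_def spt_def by auto

lemma test_integrable_mult:
  fixes g :: "'a::euclidean_space \<Rightarrow> complex"
  assumes "test_function g" "continuous_on UNIV e"
  shows "integrable lborel (\<lambda>x. g x * e x)"
proof -
  have c: "compact (spt g)" using test_compact[OF assms(1)] .
  have "continuous_on UNIV (\<lambda>x. g x * e x)"
    using smooth_cont[OF test_smooth[OF assms(1)]] assms(2) by (intro continuous_intros)
  then have "integrable lborel (\<lambda>x. indicator (spt g) x *\<^sub>R (g x * e x))"
    by (intro borel_integrable_compact[OF c]) (auto intro: continuous_on_subset)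
  moreover have "indicator (spt g) x *\<^sub>R (g x * e x) = g x * e x" for x
    using zero_outside_spt[of x g] by (cases "x \<in> spt g") auto
  ultimately show ?thesis by simp
qed

lemma integral_translate:
  fixes G :: "'a::euclidean_space \<Rightarrow> complex"
  assumes "G \<in> borel_measurable borel"
  shows "(\<integral>x. G (c + x) \<partial>lborel) = (\<integral>x. G x \<partial>lborel)"
proof -
  have m: "((+) c) \<in> measurable lborel borel" by simp
  show ?thesis using integral_distr[OF m assms] lborel_distr_plus[of c] by simp
qed

lemma integrable_translate:
  fixes G :: "'a::euclidean_space \<Rightarrow> complex"
  assumes "G \<in> borel_measurable borel" "integrable lborel G"
  shows "integrable lborel (\<lambda>x. G (c + x))"
proof -
  have m: "((+) c) \<in> measurable lborel borel" by simp
  show ?thesis using integrable_distr_eq[OF m assms(1)] lborel_distr_plus[of c] assms(2) by simp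
qed

lemma cis_deriv_lim:
  assumes "h \<longlonglongrightarrow> 0" "\<And>k. h k \<noteq> 0"
  shows "(\<lambda>k. (cis (2 * pi * h k * a) - 1) /\<^sub>R h k) \<longlonglongrightarrow> \<i> * complex_of_real (2 * pi * a)"
proof -
  define F where "F z = exp (\<i> * complex_of_real (2 * pi * a) * z)" for z
  have "(F has_field_derivative (\<i> * complex_of_real (2 * pi * a)) * F (of_real 0)) (at (of_real 0))"
    unfolding F_def by (auto intro!: derivative_eq_intros)
  then have "((\<lambda>x. F (of_real x)) has_vector_derivative \<i> * complex_of_real (2 * pi * a)) (at 0)"
    using has_vector_derivative_real_field[of F _ 0 UNIV] by (simp add: F_def)
  moreover have "(\<lambda>x. F (of_real x)) = (\<lambda>t. cis (2 * pi * t * a))"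
    by (auto simp: F_def cis_conv_exp mult_ac)
  ultimately have "((\<lambda>t. cis (2 * pi * t * a)) has_vector_derivative \<i> * complex_of_real (2 * pi * a)) (at 0)"
    by simp
  from limq[OF this assms] show ?thesis by simp
qed

lemma fourier_dd:
  fixes g :: "'a::euclidean_space \<Rightarrow> complex"
  assumes t: "test_function g"
  shows "fourier (dd g v) \<xi> = (\<i> * complex_of_real (2 * pi * (v \<bullet> \<xi>))) * fourier g \<xi>"
proof -
  have s: "smooth_fun g" and c: "compact (spt g)" using t test_smooth test_compact by auto
  obtain B where B: "B \<ge> 0" "\<And>y. norm (dd g v y) \<le> B" using dd_bounded[OF t] by blast
  define h where "h k = inverse (real (Suc k))" for k
  have hpos: "h k > 0" "h k \<le> 1" for k unfolding h_def by (auto simp: field_simps)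
  have h0: "h \<longlonglongrightarrow> 0" unfolding h_def by (rule LIMSEQ_inverse_real_of_nat)
  define e where "e x = cis (- 2 * pi * (x \<bullet> \<xi>))" for x
  have econt: "continuous_on UNIV e" unfolding e_def by (auto intro!: continuous_intros)
  have gcont: "continuous_on UNIV g" using smooth_cont[OF s] .
  have dcont: "continuous_on UNIV (dd g v)" using smooth_cont[OF smooth_dd[OF s]] .
  define S where "S k x = ((g (x + h k *\<^sub>R v) - g x) /\<^sub>R h k) * e x" for k x
  define K where "K = (\<lambda>p. fst p - snd p *\<^sub>R v) ` (spt g \<times> {0..1::real})"
  have Kc: "continuous_on (spt g \<times> {0..1::real}) (\<lambda>p. fst p - snd p *\<^sub>R v)"
    by (intro continuous_intros)
  have K: "compact K" unfolding K_def
    by (rule compact_continuous_image[OF Kc]) (intro compact_Times c compact_Icc)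
  have hnz: "h k \<noteq> 0" for k using hpos(1)[of k] by simp
  have lim: "(\<lambda>k. S k x) \<longlonglongrightarrow> dd g v x * e x" for x
  proof -
    have "((\<lambda>s. g (x + s *\<^sub>R v)) has_vector_derivative dd g v x) (at 0)"
      using line_deriv[OF s, of x v 0] by (simp add: has_vector_derivative_def)
    from limq[OF this h0 hnz] have "(\<lambda>k. (g (x + h k *\<^sub>R v) - g x) /\<^sub>R h k) \<longlonglongrightarrow> dd g v x"
      by simp
    then show ?thesis unfolding S_def by (intro tendsto_mult_right)
  qed
  have bound: "norm (S k x) \<le> indicator K x *\<^sub>R B" for k x
  proof (cases "x \<in> K")
    case True
    have "norm (g (x + h k *\<^sub>R v) - g x) \<le> B * h k" using mvt_bound[OF s B(2) hpos(1)] .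
    have "norm (S k x) = norm (g (x + h k *\<^sub>R v) - g x) / h k"
      unfolding S_def e_def using hpos[of k] by (simp add: norm_mult divide_inverse_commute)
    also have "\<dots> \<le> B * h k / h k" using \<open>norm (g (x + h k *\<^sub>R v) - g x) \<le> B * h k\<close> hpos[of k]
      by (intro divide_right_mono) auto
    also have "\<dots> = B" using hpos[of k] by simp
    finally show ?thesis using True by simp
  next
    case False
    have "x \<notin> spt g" using False unfolding K_def by (auto intro!: image_eqI[of _ _ "(x, 0)"])
    moreover have "x + h k *\<^sub>R v \<notin> spt g" using False hpos[of k] unfolding K_def
      by (auto intro!: image_eqI[of _ _ "(x + h k *\<^sub>R v, h k)"])
    ultimately show ?thesis using False by (simp add: S_def zero_outside_spt)
  qed
  have intw: "integrable lborel (\<lambda>x. indicator K x *\<^sub>R B)"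
    by (rule borel_integrable_compact[OF K]) simp
  have measS: "S k \<in> borel_measurable lborel" for k
  proof -
    have "continuous_on UNIV (S k)" unfolding S_def
      by (intro continuous_intros econt continuous_on_compose2[OF gcont]) auto
    then show ?thesis using borel_measurable_continuous_onI by simp
  qed
  have measD: "(\<lambda>x. dd g v x * e x) \<in> borel_measurable lborel"
    using borel_measurable_continuous_onI[OF continuous_on_mult[OF dcont econt]] by simp
  have conv: "(\<lambda>k. integral\<^sup>L lborel (S k)) \<longlonglongrightarrow> (\<integral>x. dd g v x * e x \<partial>lborel)"
  proof (rule integral_dominated_convergence[OF measD measS intw])
    show "AE x in lborel. (\<lambda>k. S k x) \<longlonglongrightarrow> dd g v x * e x" using lim by simp
    show "AE x in lborel. norm (S k x) \<le> indicator K x *\<^sub>R B" for k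
      using bound[of k] by (intro AE_I2) simp
  qed
  have ige: "integrable lborel (\<lambda>x. g x * e x)" using test_integrable_mult[OF t econt] .
  have meas_ge: "(\<lambda>x. g x * e x) \<in> borel_measurable borel"
    using borel_measurable_continuous_onI[OF continuous_on_mult[OF gcont econt]] .
  have shift: "g (x + h k *\<^sub>R v) * e x = (g (h k *\<^sub>R v + x) * e (h k *\<^sub>R v + x)) * cis (2 * pi * h k * (v \<bullet> \<xi>))" for k x
  proof -
    have "e x = e (h k *\<^sub>R v + x) * cis (2 * pi * h k * (v \<bullet> \<xi>))"
      unfolding e_def cis_mult by (simp add: inner_add_left algebra_simps)
    then show ?thesis by (simp add: add.commute mult.assoc)
  qed
  have int_shift: "integrable lborel (\<lambda>x. g (x + h k *\<^sub>R v) * e x)" for k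
    unfolding shift by (intro integrable_mult_left integrable_translate[OF meas_ge ige])
  have int_shift_val: "(\<integral>x. g (x + h k *\<^sub>R v) * e x \<partial>lborel) = fourier g \<xi> * cis (2 * pi * h k * (v \<bullet> \<xi>))" for k
  proof -
    have "(\<integral>x. g (x + h k *\<^sub>R v) * e x \<partial>lborel) = (\<integral>x. (g (h k *\<^sub>R v + x) * e (h k *\<^sub>R v + x)) * cis (2 * pi * h k * (v \<bullet> \<xi>)) \<partial>lborel)"
      by (simp only: shift)
    also have "\<dots> = (\<integral>x. g (h k *\<^sub>R v + x) * e (h k *\<^sub>R v + x) \<partial>lborel) * cis (2 * pi * h k * (v \<bullet> \<xi>))"
      by (rule integral_mult_left_zero)
    also have "(\<integral>x. g (h k *\<^sub>R v + x) * e (h k *\<^sub>R v + x) \<partial>lborel) = (\<integral>x. g x * e x \<partial>lborel)"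
      by (rule integral_translate[OF meas_ge])
    also have "(\<integral>x. g x * e x \<partial>lborel) = fourier g \<xi>" unfolding fourier_def e_def ..
    finally show ?thesis .
  qed
  have Sval: "integral\<^sup>L lborel (S k) = ((cis (2 * pi * h k * (v \<bullet> \<xi>)) - 1) /\<^sub>R h k) * fourier g \<xi>" for k
  proof -
    have "S k = (\<lambda>x. (g (x + h k *\<^sub>R v) * e x - g x * e x) /\<^sub>R h k)"
      unfolding S_def by (auto simp: algebra_simps)
    then have "integral\<^sup>L lborel (S k) = ((\<integral>x. g (x + h k *\<^sub>R v) * e x \<partial>lborel) - (\<integral>x. g x * e x \<partial>lborel)) /\<^sub>R h k"
      using Bochner_Integration.integral_diff[OF int_shift ige] by simp
    also have "\<dots> = ((cis (2 * pi * h k * (v \<bullet> \<xi>)) - 1) /\<^sub>R h k) * fourier g \<xi>"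
      unfolding int_shift_val by (simp add: fourier_def e_def algebra_simps)
    finally show ?thesis .
  qed
  have "(\<lambda>k. integral\<^sup>L lborel (S k)) \<longlonglongrightarrow> (\<i> * complex_of_real (2 * pi * (v \<bullet> \<xi>))) * fourier g \<xi>"
    unfolding Sval
    by (intro tendsto_mult_right cis_deriv_lim h0) (rule hnz)
  moreover have "(\<integral>x. dd g v x * e x \<partial>lborel) = fourier (dd g v) \<xi>" unfolding fourier_def e_def ..
  ultimately show ?thesis using conv LIMSEQ_unique by metis
qed



fun Dn :: "nat \<Rightarrow> 'a \<Rightarrow> ('a::euclidean_space \<Rightarrow> complex) \<Rightarrow> 'a \<Rightarrow> complex" where
  "Dn 0 v g = g"
| "Dn (Suc k) v g = dd (Dn k v g) v"

lemma test_Dn: "test_function g \<Longrightarrow> test_function (Dn k v g)"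
  by (induction k) (simp_all add: test_dd)

lemma fourier_Dn: "test_function g \<Longrightarrow>
  fourier (Dn k v g) \<xi> = (\<i> * complex_of_real (2 * pi * (v \<bullet> \<xi>))) ^ k * fourier g \<xi>"
proof (induction k)
  case 0 then show ?case by simp
next
  case (Suc k)
  have "fourier (Dn (Suc k) v g) \<xi> = (\<i> * complex_of_real (2 * pi * (v \<bullet> \<xi>))) * fourier (Dn k v g) \<xi>"
    using fourier_dd[OF test_Dn[OF Suc.prems]] by simp
  then show ?case using Suc by simp
qed

lemma fourier_norm_le:
  fixes g :: "'a::euclidean_space \<Rightarrow> complex"
  shows "norm (fourier g \<xi>) \<le> (\<integral>x. norm (g x) \<partial>lborel)"
proof -
  have "norm (fourier g \<xi>) \<le> (\<integral>x. norm (g x * cis (- 2 * pi * (x \<bullet> \<xi>))) \<partial>lborel)"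
    unfolding fourier_def by (rule integral_norm_bound)
  also have "\<dots> = (\<integral>x. norm (g x) \<partial>lborel)" by (simp add: norm_mult)
  finally show ?thesis .
qed

lemma decay:
  fixes g :: "'a::euclidean_space \<Rightarrow> complex"
  assumes "test_function g"
  shows "(2 * pi * \<bar>v \<bullet> \<xi>\<bar>) ^ k * norm (fourier g \<xi>) \<le> (\<integral>x. norm (Dn k v g x) \<partial>lborel)"
proof -
  have "norm (fourier (Dn k v g) \<xi>) = (2 * pi * \<bar>v \<bullet> \<xi>\<bar>) ^ k * norm (fourier g \<xi>)"
    unfolding fourier_Dn[OF assms] by (simp add: norm_mult norm_power abs_mult)
  then show ?thesis using fourier_norm_le[of "Dn k v g" \<xi>] by simp
qed

lemma fourier_measurable:
  fixes g :: "'a::euclidean_space \<Rightarrow> complex"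
  assumes "continuous_on UNIV g"
  shows "fourier g \<in> borel_measurable borel"
proof -
  have "continuous_on UNIV (\<lambda>p::'a \<times> 'a. g (snd p) * cis (- 2 * pi * (snd p \<bullet> fst p)))"
    by (intro continuous_intros continuous_on_compose2[OF assms]) auto
  then have "(\<lambda>p::'a \<times> 'a. g (snd p) * cis (- 2 * pi * (snd p \<bullet> fst p))) \<in> borel_measurable (lborel \<Otimes>\<^sub>M lborel)"
    unfolding lborel_prod using borel_measurable_continuous_onI by simp
  then have "(\<lambda>\<xi>. \<integral>x. g x * cis (- 2 * pi * (x \<bullet> \<xi>)) \<partial>lborel) \<in> borel_measurable lborel"
    by (intro lborel.borel_measurable_lebesgue_integral) (simp add: case_prod_beta)
  then show ?thesis unfolding fourier_def[abs_def] by simp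
qed

definition Qc :: "real \<Rightarrow> (real^'n) set" where
  "Qc R = cbox (\<chi> j. - R) (\<chi> j. R)"

lemma mem_Qc: "x \<in> Qc R \<longleftrightarrow> (\<forall>j. \<bar>x $ j\<bar> \<le> R)"
  unfolding Qc_def mem_box_cart by (auto simp: abs_le_iff minus_le_iff)

lemma measure_Qc: "R \<ge> 0 \<Longrightarrow> measure lborel (Qc R :: (real^'n) set) = (2 * R) ^ CARD('n)"
proof -
  assume R: "R \<ge> 0"
  have ne: "cbox (\<chi> j. - R) (\<chi> j. R) \<noteq> ({} :: (real^'n) set)"
  proof -
    have "(0::real^'n) \<in> cbox (\<chi> j. - R) (\<chi> j. R)" using R by (simp add: mem_box_cart)
    then show ?thesis by blast
  qed
  show ?thesis unfolding Qc_def using content_cbox_cart[OF ne] by simp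
qed

lemma integrable_Qc: "integrable lborel (\<lambda>x::real^'n. indicator (Qc R) x * (c::real))"
proof -
  have "integrable lborel (\<lambda>x::real^'n. indicator (Qc R) x *\<^sub>R c)"
    by (rule borel_integrable_compact) (auto simp: Qc_def)
  then show ?thesis by simp
qed



lemma fourier_integrable:
  fixes f :: "real^'n \<Rightarrow> complex"
  assumes f: "test_function f"
  shows "integrable lborel (fourier f)"
proof -
  define N where "N = CARD('n)"
  define I where "I j = (\<integral>x. norm (Dn (Suc N) (axis j 1) f x) \<partial>lborel)" for j :: 'n
  define C1 where "C1 = (\<Sum>j\<in>UNIV. I j) / (2 * pi) ^ (Suc N)"
  define C0 where "C0 = (\<integral>x. norm (f x) \<partial>lborel)"
  have I0: "I j \<ge> 0" for j unfolding I_def by (rule integral_nonneg_AE) simp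
  have C1: "C1 \<ge> 0" unfolding C1_def using I0 by (simp add: sum_nonneg)
  have C0: "C0 \<ge> 0" unfolding C0_def by (rule integral_nonneg_AE) simp
  have key: "\<bar>\<xi> $ j\<bar> ^ (Suc N) * norm (fourier f \<xi>) \<le> C1" for \<xi> j
  proof -
    have "(2 * pi * \<bar>\<xi> $ j\<bar>) ^ (Suc N) * norm (fourier f \<xi>) \<le> I j"
      using decay[OF f, of "axis j 1" \<xi> "Suc N"] unfolding I_def
      by (simp add: cart_eq_inner_axis inner_commute)
    also have "I j \<le> (\<Sum>j\<in>UNIV. I j)" by (rule member_le_sum) (auto simp: I0)
    finally have "(2 * pi) ^ (Suc N) * (\<bar>\<xi> $ j\<bar> ^ (Suc N) * norm (fourier f \<xi>)) \<le> (\<Sum>j\<in>UNIV. I j)"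
      by (simp only: power_mult_distrib mult.assoc)
    then show ?thesis unfolding C1_def by (simp add: pos_le_divide_eq mult.commute)
  qed
  have F0: "norm (fourier f \<xi>) \<le> C0" for \<xi> unfolding C0_def by (rule fourier_norm_le)
  define t where "t m \<xi> = C1 / (2 ^ m) ^ (Suc N) * indicator (Qc (2 ^ (Suc m))) \<xi>" for m and \<xi> :: "real^'n"
  define w where "w \<xi> = indicator (Qc 1) \<xi> * C0 + (\<Sum>m. t m \<xi>)" for \<xi> :: "real^'n"
  have t_nn: "t m \<xi> \<ge> 0" for m \<xi> unfolding t_def using C1 by simp
  have t_le: "t m \<xi> \<le> C1 * (1/2) ^ m" for m \<xi>
  proof -
    have one: "1 \<le> (2::real) ^ m" by simp
    have p: "(2::real) ^ m \<le> (2 ^ m) ^ (Suc N)" using self_le_power[OF one, of "Suc N"] by simp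
    have ind: "indicator (Qc (2 ^ (Suc m))) \<xi> \<le> (1::real)" by (simp add: indicator_def)
    have c1: "0 \<le> C1 / (2 ^ m) ^ (Suc N)" using C1 by simp
    have "t m \<xi> \<le> C1 / (2 ^ m) ^ (Suc N)" unfolding t_def using mult_left_le[OF ind c1] .
    also have "\<dots> \<le> C1 / 2 ^ m" by (rule divide_left_mono[OF p C1]) simp
    also have "C1 / 2 ^ m = C1 * (1/2) ^ m" by (simp add: power_one_over)
    finally show ?thesis .
  qed
  have geo: "summable (\<lambda>m. c * (1/2::real) ^ m)" for c by (intro summable_mult summable_geometric) simp
  have summ: "summable (\<lambda>m. t m \<xi>)" for \<xi>
    by (rule summable_comparison_test[OF _ geo[of C1]]) (use t_nn t_le in auto)
  have int_t: "integrable lborel (t m)" for m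
  proof -
    have "t m = (\<lambda>\<xi>. indicator (Qc (2 ^ (Suc m))) \<xi> * (C1 / (2 ^ m) ^ (Suc N)))"
      unfolding t_def by (auto simp: mult.commute)
    then show ?thesis by (simp only: integrable_Qc)
  qed
  have int_norm: "(\<integral>\<xi>. norm (t m \<xi>) \<partial>lborel) = C1 * 4 ^ N * (1/2) ^ m" for m
  proof -
    have e: "norm (t m \<xi>) = indicator (Qc (2 ^ (Suc m))) \<xi> * (C1 / (2 ^ m) ^ (Suc N))" for \<xi>
    proof -
      have "norm (t m \<xi>) = t m \<xi>" using t_nn[of m \<xi>] by simp
      then show ?thesis unfolding t_def by (simp only: mult.commute)
    qed
    have "(\<integral>\<xi>. norm (t m \<xi>) \<partial>lborel) = (\<integral>\<xi>. indicator (Qc (2 ^ (Suc m))) (\<xi>::real^'n) * (C1 / (2 ^ m) ^ (Suc N)) \<partial>lborel)"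
      by (simp only: e)
    also have "\<dots> = measure lborel (Qc (2 ^ (Suc m)) :: (real^'n) set) * (C1 / (2 ^ m) ^ (Suc N))"
      by simp
    also have "measure lborel (Qc (2 ^ (Suc m)) :: (real^'n) set) = (2 * 2 ^ (Suc m)) ^ N"
      unfolding N_def by (rule measure_Qc) simp
    also have "(2 * 2 ^ (Suc m)) ^ N * (C1 / (2 ^ m) ^ (Suc N)) = C1 * 4 ^ N * (1/2) ^ m"
    proof -
      have a: "(2 * 2 ^ (Suc m)) = (4::real) * 2 ^ m" by simp
      have b: "(2 * 2 ^ (Suc m)) ^ N = (4::real) ^ N * (2 ^ m) ^ N" unfolding a by (rule power_mult_distrib)
      have c: "((2::real) ^ m) ^ (Suc N) = 2 ^ m * (2 ^ m) ^ N" by (rule power_Suc)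
      have d: "(1/2::real) ^ m = 1 / 2 ^ m" by (rule power_one_over)
      have pos: "(0::real) < (2 ^ m) ^ N" "(0::real) < 2 ^ m" by simp_all
      show ?thesis unfolding b c d using pos by (simp add: field_simps)
    qed
    finally show ?thesis .
  qed
  have int_series: "integrable lborel (\<lambda>\<xi>. \<Sum>m. t m \<xi>)"
  proof (rule integrable_suminf[OF int_t])
    show "AE x in lborel. summable (\<lambda>i. norm (t i x))" using summ t_nn by (intro AE_I2) simp
    show "summable (\<lambda>i. \<integral>x. norm (t i x) \<partial>lborel)" unfolding int_norm by (rule geo)
  qed
  have int_w: "integrable lborel w"
    unfolding w_def[abs_def] by (intro Bochner_Integration.integrable_add integrable_Qc int_series)
  have bound: "norm (fourier f \<xi>) \<le> w \<xi>" for \<xi>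
  proof (cases "\<xi> \<in> Qc 1")
    case True
    have "0 \<le> (\<Sum>m. t m \<xi>)" by (rule suminf_nonneg[OF summ t_nn])
    then show ?thesis using True F0[of \<xi>] unfolding w_def by simp
  next
    case False
    then have "\<not> (\<forall>j. \<bar>\<xi> $ j\<bar> \<le> 1)" by (simp only: mem_Qc not_False_eq_True)
    then obtain j where j: "\<bar>\<xi> $ j\<bar> > 1" by (auto simp: not_le)
    define M where "M = Max (range (\<lambda>i. \<bar>\<xi> $ i\<bar>))"
    have Mge: "\<bar>\<xi> $ i\<bar> \<le> M" for i unfolding M_def by (rule Max_ge) auto
    have "M \<in> range (\<lambda>i. \<bar>\<xi> $ i\<bar>)" unfolding M_def by (rule Max_in) auto
    then obtain j0 where j0: "M = \<bar>\<xi> $ j0\<bar>" by blast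
    have M1: "M > 1" using Mge[of j] j by simp
    have "\<exists>n. M < 2 ^ n" using real_arch_pow[of 2 M] by simp
    then obtain m where m: "\<not> M < 2 ^ m" "M < 2 ^ Suc m"
      using exists_least_lemma[of "\<lambda>n. M < 2 ^ n"] M1 by auto
    have inQ: "\<xi> \<in> Qc (2 ^ Suc m)" unfolding mem_Qc using Mge m(2) by (meson less_imp_le order_trans)
    have "M ^ (Suc N) * norm (fourier f \<xi>) \<le> C1" using key[of \<xi> j0] j0 by simp
    then have "norm (fourier f \<xi>) \<le> C1 / M ^ (Suc N)" using M1 by (simp add: pos_le_divide_eq mult.commute)
    also have "\<dots> \<le> C1 / (2 ^ m) ^ (Suc N)"
      using C1 m(1) M1 by (intro divide_left_mono power_mono mult_pos_pos) (auto simp: not_less)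
    also have "\<dots> = t m \<xi>" unfolding t_def using inQ by simp
    also have "\<dots> \<le> (\<Sum>m. t m \<xi>)"
      using sum_le_suminf[OF summ[of \<xi>], of "{m}"] t_nn by simp
    also have "\<dots> \<le> w \<xi>" unfolding w_def using C0 by simp
    finally show ?thesis .
  qed
  have meas: "fourier f \<in> borel_measurable lborel"
    unfolding measurable_lborel2 by (rule fourier_measurable[OF smooth_cont[OF test_smooth[OF f]]])
  show ?thesis
  proof (rule Bochner_Integration.integrable_bound[OF int_w meas])
    show "AE x in lborel. norm (fourier f x) \<le> norm (w x)"
    proof (intro AE_I2)
      fix x
      have "w x \<le> norm (w x)" by simp
      then show "norm (fourier f x) \<le> norm (w x)" by (rule order_trans[OF bound])
    qed
  qed
qed



lemma sphere_finite: "finite_measure (sphere_measure :: 'a::euclidean_space measure)"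
proof
  define M :: "'a measure" where "M = density lborel (\<lambda>x. ennreal (real DIM('a)) * indicator (cball 0 1 - {0}) x)"
  have le: "emeasure (sphere_measure :: 'a measure) B \<le> emeasure M (space M)" for B
  proof -
    have "emeasure (sphere_measure :: 'a measure) B
      = (if B \<in> sigma_sets (space (restrict_space borel (sphere (0::'a) 1))) (sets (restrict_space borel (sphere (0::'a) 1)))
           \<and> measure_space (space (restrict_space borel (sphere (0::'a) 1))) (sigma_sets (space (restrict_space borel (sphere (0::'a) 1))) (sets (restrict_space borel (sphere (0::'a) 1))))
               (\<lambda>A. emeasure M ((\<lambda>x. x /\<^sub>R norm x) -` A \<inter> space M))
         then emeasure M ((\<lambda>x. x /\<^sub>R norm x) -` B \<inter> space M) else 0)"
      unfolding sphere_measure_def distr_def M_def emeasure_measure_of_conv by simp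
    also have "\<dots> \<le> emeasure M (space M)" by (simp add: emeasure_space)
    finally show ?thesis .
  qed
  have sM: "space M = UNIV" unfolding M_def by simp
  have Sb[measurable]: "cball (0::'a) 1 - {0} \<in> sets borel" by (intro sets.Diff borel_closed) auto
  have mi: "(\<lambda>x::'a. ennreal (real DIM('a)) * indicator (cball 0 1 - {0}) x) \<in> borel_measurable lborel"
    by measurable
  have "emeasure M (space M) = (\<integral>\<^sup>+ x. ennreal (real DIM('a)) * indicator (cball 0 1 - {0}) (x::'a) \<partial>lborel)"
    unfolding M_def sM by (subst emeasure_density[OF mi]) simp_all
  also have "\<dots> = ennreal (real DIM('a)) * emeasure lborel (cball (0::'a) 1 - {0})"
    by (rule nn_integral_cmult_indicator) simp
  also have "\<dots> < \<infinity>"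
  proof -
    have "emeasure lborel (cball (0::'a) 1 - {0}) < \<infinity>"
      by (rule emeasure_bounded_finite) (rule bounded_subset[OF bounded_cball], blast)
    then show ?thesis by (simp add: ennreal_mult_less_top)
  qed
  finally have fin: "emeasure M (space M) < \<infinity>" .
  have "emeasure (sphere_measure :: 'a measure) (space sphere_measure) < \<infinity>"
    by (rule order.strict_trans1[OF le fin])
  then show "emeasure (sphere_measure :: 'a measure) (space sphere_measure) \<noteq> \<infinity>"
    by (simp only: less_top)
qed

lemma space_sphere_measure: "space (sphere_measure :: 'a::euclidean_space measure) = sphere 0 1"
  unfolding sphere_measure_def by simp

lemma sets_sphere_measure: "sets (sphere_measure :: 'a::euclidean_space measure) = sets (restrict_space borel (sphere 0 1))"
  unfolding sphere_measure_def by simp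

lemma ident_sphere: "(\<lambda>x. x) \<in> measurable (sphere_measure :: 'a::euclidean_space measure) borel"
proof -
  have "(\<lambda>x. x) \<in> measurable (restrict_space borel (sphere (0::'a) 1)) borel"
    by (rule measurable_restrict_space1) simp
  then show ?thesis by (simp only: measurable_cong_sets[OF sets_sphere_measure refl])
qed

lemma pair_meas:
  fixes H :: "'a::euclidean_space \<times> 'a \<Rightarrow> 'c::{banach, second_countable_topology}"
  assumes "H \<in> borel_measurable borel"
  shows "H \<in> borel_measurable (sphere_measure \<Otimes>\<^sub>M lborel)"
proof -
  have a: "(\<lambda>p. fst p) \<in> measurable (sphere_measure \<Otimes>\<^sub>M (lborel :: 'a measure)) borel"
    by (rule measurable_compose[OF measurable_fst ident_sphere])
  have b: "(\<lambda>p. snd p) \<in> measurable (sphere_measure \<Otimes>\<^sub>M (lborel :: 'a measure)) borel"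
    using measurable_snd[of "sphere_measure :: 'a measure" "lborel :: 'a measure"] by simp
  have "(\<lambda>p. (fst p, snd p)) \<in> measurable (sphere_measure \<Otimes>\<^sub>M (lborel :: 'a measure)) (borel \<Otimes>\<^sub>M borel)"
    by (rule measurable_Pair[OF a b])
  then have "(\<lambda>p. p) \<in> measurable (sphere_measure \<Otimes>\<^sub>M (lborel :: 'a measure)) borel"
    unfolding borel_prod by simp
  from measurable_compose[OF this assms] show ?thesis by simp
qed

lemma K_meas: "(\<lambda>p::'a::euclidean_space \<times> 'a. \<bar>snd p \<bullet> fst p\<bar> powr r / norm (snd p) powr r) \<in> borel_measurable borel"
  unfolding borel_prod[symmetric] by measurable



theorem mainTheorem3:
  fixes r :: real and \<phi> :: "real^'n \<Rightarrow> complex" and A :: real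
    and f :: "real^'n \<Rightarrow> complex"
  assumes n2: "CARD('n) \<ge> 2"
    and r: "r > 0"
    and phi_meas: "\<phi> \<in> borel_measurable sphere_measure"
    and phi_bdd: "\<exists>C. AE \<theta> in sphere_measure. norm (\<phi> \<theta>) \<le> C"
    and A_pos: "A > 0"
    and A_def: "\<forall>\<xi>::real^'n. (\<integral>\<theta>. \<bar>\<xi> \<bullet> \<theta>\<bar> powr r \<partial>sphere_measure) = A * norm \<xi> powr r"
    and f: "test_function f"
  shows "AE x in lborel.
     multiplier_op
       (\<lambda>\<xi>. (\<integral>\<theta>. complex_of_real (\<bar>\<xi> \<bullet> \<theta>\<bar> powr r) * \<phi> \<theta> \<partial>sphere_measure)
              / complex_of_real (\<integral>\<theta>. \<bar>\<xi> \<bullet> \<theta>\<bar> powr r \<partial>sphere_measure)) f x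
     = complex_of_real (inverse A) *
       (\<integral>\<theta>. multiplier_op (\<lambda>\<xi>. complex_of_real (\<bar>\<xi> \<bullet> \<theta>\<bar> powr r / norm \<xi> powr r)) f x * \<phi> \<theta>
          \<partial>sphere_measure)"
proof (rule AE_I2)
  fix x :: "real^'n"
  let ?S = "sphere_measure :: (real^'n) measure"
  interpret S: finite_measure ?S by (rule sphere_finite)
  interpret P: pair_sigma_finite ?S "lborel :: (real^'n) measure"
    unfolding pair_sigma_finite_def using S.sigma_finite_measure_axioms lborel.sigma_finite_measure_axioms
    by blast
  obtain C where C: "AE \<theta> in ?S. norm (\<phi> \<theta>) \<le> C" using phi_bdd by blast
  have Fint: "integrable lborel (fourier f)" by (rule fourier_integrable[OF f])
  have Fmeas: "fourier f \<in> borel_measurable borel"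
    by (rule fourier_measurable[OF smooth_cont[OF test_smooth[OF f]]])
  define E where "E \<xi> = fourier f \<xi> * cis (2 * pi * (x \<bullet> \<xi>))" for \<xi> :: "real^'n"
  define K where "K \<theta> \<xi> = \<bar>\<xi> \<bullet> \<theta>\<bar> powr r / norm \<xi> powr r" for \<theta> \<xi> :: "real^'n"
  define G where "G \<theta> \<xi> = complex_of_real (K \<theta> \<xi>) * E \<xi> * \<phi> \<theta>" for \<theta> \<xi> :: "real^'n"
  have Kb: "0 \<le> K \<theta> \<xi> \<and> K \<theta> \<xi> \<le> 1" if "\<theta> \<in> space ?S" for \<theta> \<xi>
  proof -
    have nt: "norm \<theta> = 1" using that by (simp add: space_sphere_measure)
    have "\<bar>\<xi> \<bullet> \<theta>\<bar> \<le> norm \<xi>" using Cauchy_Schwarz_ineq2[of \<xi> \<theta>] nt by simp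
    then have le: "\<bar>\<xi> \<bullet> \<theta>\<bar> powr r \<le> norm \<xi> powr r" using r by (intro powr_mono2) auto
    show ?thesis
    proof (cases "norm \<xi> powr r = 0")
      case True then show ?thesis by (simp add: K_def)
    next
      case False
      then have "norm \<xi> powr r > 0" by simp
      then show ?thesis using le unfolding K_def by (simp add: divide_le_eq_1)
    qed
  qed
  have Emeas: "E \<in> borel_measurable borel"
  proof -
    have "(\<lambda>\<xi>::real^'n. cis (2 * pi * (x \<bullet> \<xi>))) \<in> borel_measurable borel"
      by (intro borel_measurable_continuous_onI) (auto intro!: continuous_intros)
    then show ?thesis unfolding E_def[abs_def] using Fmeas by measurable
  qed
  have Eint: "integrable lborel E"
  proof (rule Bochner_Integration.integrable_bound[OF Fint])
    show "E \<in> borel_measurable lborel" using Emeas by simp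
    show "AE \<xi> in lborel. norm (E \<xi>) \<le> norm (fourier f \<xi>)" by (intro AE_I2) (simp add: E_def norm_mult)
  qed
  have Kmeas: "(\<lambda>p. K (fst p) (snd p)) \<in> borel_measurable (?S \<Otimes>\<^sub>M lborel)"
    unfolding K_def by (rule pair_meas[OF K_meas])
  have Emeas2: "(\<lambda>p. E (snd p)) \<in> borel_measurable (?S \<Otimes>\<^sub>M lborel)"
    by (rule pair_meas) (rule measurable_compose[OF _ Emeas], simp add: borel_prod[symmetric])
  have phimeas2: "(\<lambda>p. \<phi> (fst p)) \<in> borel_measurable (?S \<Otimes>\<^sub>M lborel)"
    by (rule measurable_compose[OF measurable_fst phi_meas])
  have Gmeas: "case_prod G \<in> borel_measurable (?S \<Otimes>\<^sub>M lborel)"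
  proof -
    have "(\<lambda>p. complex_of_real (K (fst p) (snd p)) * E (snd p) * \<phi> (fst p)) \<in> borel_measurable (?S \<Otimes>\<^sub>M lborel)"
      using Kmeas Emeas2 phimeas2 by measurable
    then show ?thesis by (simp add: G_def case_prod_beta')
  qed
  have Gsec_meas: "(\<lambda>\<xi>. G \<theta> \<xi>) \<in> borel_measurable lborel" if "\<theta> \<in> space ?S" for \<theta>
    using measurable_compose[OF measurable_Pair1'[OF that] Gmeas] by simp
  have Gnorm: "norm (G \<theta> \<xi>) \<le> norm (\<phi> \<theta>) * norm (E \<xi>)" if "\<theta> \<in> space ?S" for \<theta> \<xi>
  proof -
    have "norm (G \<theta> \<xi>) = K \<theta> \<xi> * (norm (E \<xi>) * norm (\<phi> \<theta>))"
      using Kb[OF that, of \<xi>] by (simp add: G_def norm_mult)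
    also have "\<dots> \<le> 1 * (norm (E \<xi>) * norm (\<phi> \<theta>))"
      using Kb[OF that, of \<xi>] by (intro mult_right_mono) auto
    finally show ?thesis by (simp add: mult.commute)
  qed
  have Gsec_int: "integrable lborel (\<lambda>\<xi>. G \<theta> \<xi>)" if "\<theta> \<in> space ?S" for \<theta>
  proof (rule Bochner_Integration.integrable_bound[OF _ Gsec_meas[OF that]])
    show "integrable lborel (\<lambda>\<xi>. norm (\<phi> \<theta>) * norm (E \<xi>))"
      by (intro integrable_mult_right integrable_norm Eint)
    show "AE \<xi> in lborel. norm (G \<theta> \<xi>) \<le> norm (norm (\<phi> \<theta>) * norm (E \<xi>))"
      using Gnorm[OF that] by (intro AE_I2) simp
  qed
  have Gint: "integrable (?S \<Otimes>\<^sub>M lborel) (case_prod G)"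
  proof (rule P.Fubini_integrable)
    show "case_prod G \<in> borel_measurable (?S \<Otimes>\<^sub>M lborel)" by (rule Gmeas)
    show "AE \<theta> in ?S. integrable lborel (\<lambda>\<xi>. case_prod G (\<theta>, \<xi>))"
      using Gsec_int by (intro AE_I2) simp
    have nmeas: "(\<lambda>\<theta>. \<integral>\<xi>. norm (case_prod G (\<theta>, \<xi>)) \<partial>lborel) \<in> borel_measurable ?S"
    proof (rule lborel.borel_measurable_lebesgue_integral)
      show "case_prod (\<lambda>\<theta> \<xi>. norm (case_prod G (\<theta>, \<xi>))) \<in> borel_measurable (?S \<Otimes>\<^sub>M lborel)"
        using Gmeas by (simp add: case_prod_beta' borel_measurable_norm)
    qed
    show "integrable ?S (\<lambda>\<theta>. \<integral>\<xi>. norm (case_prod G (\<theta>, \<xi>)) \<partial>lborel)"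
    proof (rule S.integrable_const_bound[OF _ nmeas])
      show "AE \<theta> in ?S. norm (\<integral>\<xi>. norm (case_prod G (\<theta>, \<xi>)) \<partial>lborel) \<le> C * (\<integral>\<xi>. norm (E \<xi>) \<partial>lborel)"
        using C
      proof (rule AE_mp, intro AE_I2 impI)
        fix \<theta> assume th: "\<theta> \<in> space ?S" and Cth: "norm (\<phi> \<theta>) \<le> C"
        have "(\<integral>\<xi>. norm (G \<theta> \<xi>) \<partial>lborel) \<le> (\<integral>\<xi>. norm (\<phi> \<theta>) * norm (E \<xi>) \<partial>lborel)"
          by (rule integral_mono') (auto intro!: integrable_mult_right integrable_norm Eint Gnorm[OF th])
        also have "\<dots> = norm (\<phi> \<theta>) * (\<integral>\<xi>. norm (E \<xi>) \<partial>lborel)" by simp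
        also have "\<dots> \<le> C * (\<integral>\<xi>. norm (E \<xi>) \<partial>lborel)"
          using Cth by (intro mult_right_mono) (auto intro!: integral_nonneg_AE)
        finally have "(\<integral>\<xi>. norm (G \<theta> \<xi>) \<partial>lborel) \<le> C * (\<integral>\<xi>. norm (E \<xi>) \<partial>lborel)" .
        moreover have "0 \<le> (\<integral>\<xi>. norm (G \<theta> \<xi>) \<partial>lborel)" by (intro integral_nonneg_AE) simp
        ultimately show "norm (\<integral>\<xi>. norm (case_prod G (\<theta>, \<xi>)) \<partial>lborel) \<le> C * (\<integral>\<xi>. norm (E \<xi>) \<partial>lborel)"
          by simp
      qed
    qed
  qed
  have fub: "(\<integral>\<xi>. (\<integral>\<theta>. G \<theta> \<xi> \<partial>?S) \<partial>lborel) = (\<integral>\<theta>. (\<integral>\<xi>. G \<theta> \<xi> \<partial>lborel) \<partial>?S)"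
    by (rule P.Fubini_integral[OF Gint])
  have lhs_pt: "(\<integral>\<theta>. complex_of_real (\<bar>\<xi> \<bullet> \<theta>\<bar> powr r) * \<phi> \<theta> \<partial>?S)
              / complex_of_real (\<integral>\<theta>. \<bar>\<xi> \<bullet> \<theta>\<bar> powr r \<partial>?S) * fourier f \<xi> * cis (2 * pi * (x \<bullet> \<xi>))
      = complex_of_real (inverse A) * (\<integral>\<theta>. G \<theta> \<xi> \<partial>?S)" for \<xi>
  proof -
    define I where "I = (\<integral>\<theta>. complex_of_real (\<bar>\<xi> \<bullet> \<theta>\<bar> powr r) * \<phi> \<theta> \<partial>?S)"
    define b where "b = norm \<xi> powr r"
    have "(\<integral>\<theta>. G \<theta> \<xi> \<partial>?S) = (\<integral>\<theta>. (complex_of_real (\<bar>\<xi> \<bullet> \<theta>\<bar> powr r) * \<phi> \<theta>) * (E \<xi> / complex_of_real b) \<partial>?S)"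
      unfolding G_def K_def b_def by (intro Bochner_Integration.integral_cong refl) (simp add: divide_inverse mult_ac)
    also have "\<dots> = I * (E \<xi> / complex_of_real b)" unfolding I_def by (rule integral_mult_left_zero)
    finally have eq: "(\<integral>\<theta>. G \<theta> \<xi> \<partial>?S) = I * (E \<xi> / complex_of_real b)" .
    have den: "(\<integral>\<theta>. \<bar>\<xi> \<bullet> \<theta>\<bar> powr r \<partial>?S) = A * b" unfolding b_def using A_def by simp
    show ?thesis unfolding eq den I_def[symmetric] E_def
      by (simp add: divide_inverse mult_ac)
  qed
  have lhs: "multiplier_op
       (\<lambda>\<xi>. (\<integral>\<theta>. complex_of_real (\<bar>\<xi> \<bullet> \<theta>\<bar> powr r) * \<phi> \<theta> \<partial>?S)
              / complex_of_real (\<integral>\<theta>. \<bar>\<xi> \<bullet> \<theta>\<bar> powr r \<partial>?S)) f x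
      = complex_of_real (inverse A) * (\<integral>\<xi>. (\<integral>\<theta>. G \<theta> \<xi> \<partial>?S) \<partial>lborel)"
    unfolding multiplier_op_def lhs_pt by (rule integral_mult_right_zero)
  have rhs_pt: "multiplier_op (\<lambda>\<xi>. complex_of_real (\<bar>\<xi> \<bullet> \<theta>\<bar> powr r / norm \<xi> powr r)) f x * \<phi> \<theta>
      = (\<integral>\<xi>. G \<theta> \<xi> \<partial>lborel)" for \<theta>
  proof -
    have "multiplier_op (\<lambda>\<xi>. complex_of_real (\<bar>\<xi> \<bullet> \<theta>\<bar> powr r / norm \<xi> powr r)) f x * \<phi> \<theta>
       = (\<integral>\<xi>. complex_of_real (K \<theta> \<xi>) * fourier f \<xi> * cis (2 * pi * (x \<bullet> \<xi>)) * \<phi> \<theta> \<partial>lborel)"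
      unfolding multiplier_op_def K_def by (rule integral_mult_left_zero[symmetric])
    also have "\<dots> = (\<integral>\<xi>. G \<theta> \<xi> \<partial>lborel)" unfolding G_def E_def by (simp add: mult_ac)
    finally show ?thesis .
  qed
  show "multiplier_op
       (\<lambda>\<xi>. (\<integral>\<theta>. complex_of_real (\<bar>\<xi> \<bullet> \<theta>\<bar> powr r) * \<phi> \<theta> \<partial>sphere_measure)
              / complex_of_real (\<integral>\<theta>. \<bar>\<xi> \<bullet> \<theta>\<bar> powr r \<partial>sphere_measure)) f x
     = complex_of_real (inverse A) *
       (\<integral>\<theta>. multiplier_op (\<lambda>\<xi>. complex_of_real (\<bar>\<xi> \<bullet> \<theta>\<bar> powr r / norm \<xi> powr r)) f x * \<phi> \<theta>
          \<partial>sphere_measure)"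
    unfolding lhs rhs_pt fub ..
qed


end
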